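(* Let $X,Y$ be continuous processes. Then 1. $L(X,Y)_t=\int_0^tX\,d^\circ Y-\int_0^tY\,d^\circ X$; 2. $L(X,Y)_t=\int_0^tX\,d^-Y-\int_0^tY\,d^-X$; where each identity is understood in the sense that if two of its three terms exist, then the third also exists and the identity holds.
   Context: $T>0$; continuous functions are extended by $f(t)=f(0)$ for $t\le0$, $f(t)=f(T)$ for $t>T$. Limits are ucp: uniform in $t\in[0,T]$, in probability, as $\varepsilon\to0^+$. $\int_0^tX\,d^-Y$ is the ucp limit of $\int_0^tX(s)\frac{Y(s+\varepsilon)-Y(s)}{\varepsilon}ds$, $\int_0^tX\,d^\circ Y$ the ucp limit of $\int_0^tX(s)\frac{Y(s+\varepsilon)-Y(s-\varepsilon)}{2\varepsilon}ds$, and the Lévy area $L(X,Y)_t$ the ucp limit of $\int_0^t\frac{X_sY_{s+\varepsilon}-X_{s+\varepsilon}Y_s}{\varepsilon}ds$. *)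

theory Defs
  imports "HOL-Probability.Probability"
begin

text \<open>Processes are maps X :: real => 'a => real on the time interval [0,T];
  they are extended by X(t) = X(0) for t <= 0 and X(t) = X(T) for t > T.\<close>

definition ext :: "real \<Rightarrow> (real \<Rightarrow> 'a \<Rightarrow> real) \<Rightarrow> real \<Rightarrow> 'a \<Rightarrow> real" where
  "ext T X s \<omega> = X (max 0 (min T s)) \<omega>"

definition cont_process :: "'a measure \<Rightarrow> real \<Rightarrow> (real \<Rightarrow> 'a \<Rightarrow> real) \<Rightarrow> bool" where
  "cont_process M T X \<longleftrightarrow>
     (\<forall>t\<in>{0..T}. X t \<in> borel_measurable M) \<and>
     (\<forall>\<omega>\<in>space M. continuous_on {0..T} (\<lambda>t. X t \<omega>))"

text \<open>The probability of the (possibly non-measurable)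
  exceptional event is taken as an outer probability.\<close>
definition ucp_conv :: "'a measure \<Rightarrow> real \<Rightarrow> (real \<Rightarrow> real \<Rightarrow> 'a \<Rightarrow> real)
                        \<Rightarrow> (real \<Rightarrow> 'a \<Rightarrow> real) \<Rightarrow> bool" where
  "ucp_conv M T F I \<longleftrightarrow> cont_process M T I \<and>
     (\<forall>\<delta>>0. \<forall>\<eta>>0. \<exists>\<epsilon>0>0. \<forall>\<epsilon>. 0 < \<epsilon> \<and> \<epsilon> < \<epsilon>0 \<longrightarrow>
        (\<exists>A\<in>sets M. {\<omega>\<in>space M. \<exists>t\<in>{0..T}. \<bar>F \<epsilon> t \<omega> - I t \<omega>\<bar> > \<delta>} \<subseteq> A
                    \<and> measure M A < \<eta>))"

definition fwd_approx :: "real \<Rightarrow> (real \<Rightarrow> 'a \<Rightarrow> real) \<Rightarrow> (real \<Rightarrow> 'a \<Rightarrow> real)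
                          \<Rightarrow> real \<Rightarrow> real \<Rightarrow> 'a \<Rightarrow> real" where
  "fwd_approx T X Y \<epsilon> t \<omega> =
     integral {0..t} (\<lambda>s. ext T X s \<omega> * ((ext T Y (s + \<epsilon>) \<omega> - ext T Y s \<omega>) / \<epsilon>))"

definition sym_approx :: "real \<Rightarrow> (real \<Rightarrow> 'a \<Rightarrow> real) \<Rightarrow> (real \<Rightarrow> 'a \<Rightarrow> real)
                          \<Rightarrow> real \<Rightarrow> real \<Rightarrow> 'a \<Rightarrow> real" where
  "sym_approx T X Y \<epsilon> t \<omega> =
     integral {0..t} (\<lambda>s. ext T X s \<omega> * ((ext T Y (s + \<epsilon>) \<omega> - ext T Y (s - \<epsilon>) \<omega>) / (2 * \<epsilon>)))"

definition levy_approx :: "real \<Rightarrow> (real \<Rightarrow> 'a \<Rightarrow> real) \<Rightarrow> (real \<Rightarrow> 'a \<Rightarrow> real)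
                          \<Rightarrow> real \<Rightarrow> real \<Rightarrow> 'a \<Rightarrow> real" where
  "levy_approx T X Y \<epsilon> t \<omega> =
     integral {0..t} (\<lambda>s. (ext T X s \<omega> * ext T Y (s + \<epsilon>) \<omega> - ext T X (s + \<epsilon>) \<omega> * ext T Y s \<omega>) / \<epsilon>)"

end

theory Submission imports Defs begin

lemma cont_shift:
  fixes x :: "real \<Rightarrow> real"
  assumes "continuous_on UNIV x"
  shows "continuous_on UNIV (\<lambda>s. x (s + a))"
  by (rule continuous_on_compose2[OF assms]) (auto intro!: continuous_intros)

lemma det_bound:
  fixes x y :: "real \<Rightarrow> real"
  assumes cx: "continuous_on UNIV x" and cy: "continuous_on UNIV y"
    and bx: "\<And>s. \<bar>x s\<bar> \<le> m" and yb: "\<And>s. \<bar>y s\<bar> \<le> m"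
    and ox: "\<And>s u. \<bar>s - u\<bar> < d \<Longrightarrow> \<bar>x s - x u\<bar> \<le> c"
    and oy: "\<And>s u. \<bar>s - u\<bar> < d \<Longrightarrow> \<bar>y s - y u\<bar> \<le> c"
    and e: "0 < e" "e < d" "e \<le> 1" and t: "0 \<le> t"
  shows "\<bar>integral {0..t} (\<lambda>s. (x s * y (s + e) - x (s + e) * y s) / e)
          - integral {0..t} (\<lambda>s. x s * ((y (s + e) - y (s - e)) / (2 * e)))
          + integral {0..t} (\<lambda>s. y s * ((x (s + e) - x (s - e)) / (2 * e)))\<bar> \<le> 2 * m * c"
proof -
  define g where "g = (\<lambda>s. (x s * y (s + e) - x (s + e) * y s) / e)"
  have m0: "0 \<le> m" using bx[of 0] by linarith
  have c0: "0 \<le> c" using ox[of 0 0] e by simp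
  have cx': "\<And>a. continuous_on UNIV (\<lambda>s. x (s + a))" using cont_shift[OF cx] .
  have cy': "\<And>a. continuous_on UNIV (\<lambda>s. y (s + a))" using cont_shift[OF cy] .
  have cg: "continuous_on UNIV g" unfolding g_def
    using cx cy cx'[of e] cy'[of e] e by (auto intro!: continuous_intros)
  have cg': "continuous_on UNIV (\<lambda>s. g (s + a))" for a using cont_shift[OF cg] .
  have gint: "\<And>a b. g integrable_on {a..b}"
    by (rule integrable_continuous_interval) (rule continuous_on_subset[OF cg], auto)
  define G where "G = (\<lambda>u. integral {-1..u} g)"
  have Gd: "integral {a..b} g = G b - G a" if "-1 \<le> a" "a \<le> b" for a b
    using Henstock_Kurzweil_Integration.integral_combine[OF that gint] unfolding G_def by simp
  have gb: "\<bar>g s\<bar> \<le> 2 * m * c / e" for s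
  proof -
    have "g s = (x s * (y (s + e) - y s) - y s * (x (s + e) - x s)) / e"
      unfolding g_def by (simp add: algebra_simps)
    moreover have "\<bar>x s * (y (s + e) - y s)\<bar> \<le> m * c"
      unfolding abs_mult by (rule mult_mono) (use bx oy[of "s+e" s] e m0 in auto)
    moreover have "\<bar>y s * (x (s + e) - x s)\<bar> \<le> m * c"
      unfolding abs_mult by (rule mult_mono) (use yb ox[of "s+e" s] e m0 in auto)
    ultimately show ?thesis using e by (simp add: divide_simps)
  qed
  have ib: "\<bar>integral {a - e..a} g\<bar> \<le> 2 * m * c" for a
  proof -
    have "norm (integral {a - e..a} g) \<le> 2 * m * c / e * (a - (a - e))"
      by (rule integral_bound) (use e gb in \<open>auto intro: continuous_on_subset[OF cg]\<close>)
    then show ?thesis using e by simp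
  qed
  have cgm: "continuous_on UNIV (\<lambda>s. g (s - e))" using cg'[of "-e"] by simp
  define I0 where "I0 = integral {0..t} g"
  define I1 where "I1 = integral {0..t} (\<lambda>s. g (s - e))"
  have h0: "(g has_integral I0) {0..t}" unfolding I0_def using gint by blast
  have h1: "((\<lambda>s. g (s - e)) has_integral I1) {0..t}" unfolding I1_def
    by (rule integrable_integral, rule integrable_continuous_interval)
       (rule continuous_on_subset[OF cgm], auto)
  define fxy where "fxy = (\<lambda>s. x s * ((y (s + e) - y (s - e)) / (2 * e)))"
  define fyx where "fyx = (\<lambda>s. y s * ((x (s + e) - x (s - e)) / (2 * e)))"
  have cfxy: "continuous_on UNIV fxy" unfolding fxy_def
    using e cx cy'[of e] cy'[of "-e"] by (auto intro!: continuous_intros)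
  have cfyx: "continuous_on UNIV fyx" unfolding fyx_def
    using e cy cx'[of e] cx'[of "-e"] by (auto intro!: continuous_intros)
  have hxy: "(fxy has_integral integral {0..t} fxy) {0..t}"
    by (rule integrable_integral, rule integrable_continuous_interval)
       (rule continuous_on_subset[OF cfxy], auto)
  have hyx: "(fyx has_integral integral {0..t} fyx) {0..t}"
    by (rule integrable_integral, rule integrable_continuous_interval)
       (rule continuous_on_subset[OF cfyx], auto)
  have eqf: "fxy s - fyx s = g s / 2 + g (s - e) / 2" for s
    unfolding fxy_def fyx_def g_def using e by (simp add: field_simps)
  have "((\<lambda>s. fxy s - fyx s) has_integral (integral {0..t} fxy - integral {0..t} fyx)) {0..t}"
    by (rule has_integral_diff[OF hxy hyx])
  moreover have "((\<lambda>s. g s / 2 + g (s - e) / 2) has_integral (I0 / 2 + I1 / 2)) {0..t}"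
    by (intro has_integral_add has_integral_divide h0 h1)
  ultimately have eqI: "integral {0..t} fxy - integral {0..t} fyx = I0 / 2 + I1 / 2"
    unfolding eqf using has_integral_unique by blast
  have "I1 = integral {0 + (-e)..t + (-e)} g"
    unfolding I1_def integral_shift_Icc_real[symmetric] by (simp add: o_def)
  then have I1G: "I1 = G (t - e) - G (-e)" using Gd[of "-e" "t - e"] e t by simp
  have I0G: "I0 = G t - G 0" using Gd[of 0 t] t unfolding I0_def by simp
  have "I0 - I1 = integral {t - e..t} g - integral {0 - e..0} g"
    using I1G I0G Gd[of "t - e" t] Gd[of "-e" 0] e t by simp
  then have "\<bar>I0 - I1\<bar> \<le> 4 * m * c" using ib[of t] ib[of 0] by linarith
  moreover have "integral {0..t} g - integral {0..t} fxy + integral {0..t} fyx = (I0 - I1) / 2"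
    using eqI unfolding I0_def by simp
  ultimately have "\<bar>integral {0..t} g - integral {0..t} fxy + integral {0..t} fyx\<bar> \<le> 2 * m * c"
    by simp
  then show ?thesis unfolding g_def fxy_def fyx_def .
qed

lemma clamp_in: "0 < T \<Longrightarrow> max 0 (min T s) \<in> {0..T::real}" by auto

lemma ext_cont:
  assumes "cont_process M T X" "0 < T" "\<omega> \<in> space M"
  shows "continuous_on UNIV (\<lambda>s. ext T X s \<omega>)"
  unfolding ext_def
  by (rule continuous_on_compose2[of "{0..T}" "\<lambda>t. X t \<omega>"])
     (use assms in \<open>auto simp: cont_process_def intro!: continuous_intros\<close>)

lemma ext_meas:
  assumes "cont_process M T X" "0 < T"
  shows "(\<lambda>\<omega>. ext T X s \<omega>) \<in> borel_measurable M"
  unfolding ext_def using assms clamp_in[of T s] by (auto simp: cont_process_def)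

lemma ext_bounded:
  assumes "cont_process M T X" "0 < T" "\<omega> \<in> space M"
  shows "\<exists>B. \<forall>s. \<bar>ext T X s \<omega>\<bar> \<le> B"
proof -
  have "continuous_on {0..T} (\<lambda>t. X t \<omega>)" using assms by (auto simp: cont_process_def)
  then have "compact ((\<lambda>t. X t \<omega>) ` {0..T})" by (rule compact_continuous_image) simp
  then obtain B where "\<forall>v\<in>(\<lambda>t. X t \<omega>) ` {0..T}. \<bar>v\<bar> \<le> B"
    using compact_imp_bounded bounded_real by blast
  then show ?thesis using clamp_in[OF assms(2)] unfolding ext_def by blast
qed

lemma ext_unif:
  assumes "cont_process M T X" "0 < T" "\<omega> \<in> space M" "0 < c"
  shows "\<exists>d>0. \<forall>s u. \<bar>s - u\<bar> < d \<longrightarrow> \<bar>ext T X s \<omega> - ext T X u \<omega>\<bar> < c"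
proof -
  have "continuous_on {0..T} (\<lambda>t. X t \<omega>)" using assms by (auto simp: cont_process_def)
  then have "uniformly_continuous_on {0..T} (\<lambda>t. X t \<omega>)"
    by (rule compact_uniformly_continuous) simp
  then obtain d where d: "d > 0" "\<forall>a\<in>{0..T}. \<forall>b\<in>{0..T}. dist b a < d \<longrightarrow> dist (X b \<omega>) (X a \<omega>) < c"
    unfolding uniformly_continuous_on_def using assms(4) by metis
  have "\<bar>ext T X s \<omega> - ext T X u \<omega>\<bar> < c" if "\<bar>s - u\<bar> < d" for s u
  proof -
    have "\<bar>max 0 (min T s) - max 0 (min T u)\<bar> < d" using that d(1) by (auto simp: abs_if max_def min_def)
    then show ?thesis using d(2) clamp_in[OF assms(2), of s] clamp_in[OF assms(2), of u]
      unfolding ext_def dist_real_def by blast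
  qed
  then show ?thesis using d(1) by blast
qed

lemma dense_le:
  fixes f :: "real \<Rightarrow> real"
  assumes "continuous_on UNIV f" "open S" "\<And>q. q \<in> \<rat> \<Longrightarrow> q \<in> S \<Longrightarrow> f q \<le> a" "s \<in> S"
  shows "f s \<le> a"
proof -
  have "s \<in> closure (S \<inter> \<rat>)"
    using open_Int_closure_subset[OF assms(2), of \<rat>] assms(4) Rats_closure_real by auto
  then show ?thesis
    by (rule continuous_le_on_closure[rotated]) (use assms in \<open>auto intro: continuous_on_subset\<close>)
qed


definition negl :: "'a measure \<Rightarrow> real \<Rightarrow> (real \<Rightarrow> real \<Rightarrow> 'a \<Rightarrow> real) \<Rightarrow> bool" where
  "negl M T D \<longleftrightarrow> (\<forall>\<delta>>0. \<forall>\<eta>>0. \<exists>\<epsilon>0>0. \<forall>\<epsilon>. 0 < \<epsilon> \<and> \<epsilon> < \<epsilon>0 \<longrightarrow>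
        (\<exists>A\<in>sets M. {\<omega>\<in>space M. \<exists>t\<in>{0..T}. \<bar>D \<epsilon> t \<omega>\<bar> > \<delta>} \<subseteq> A
                    \<and> measure M A < \<eta>))"

lemma small_measure:
  fixes A :: "nat \<Rightarrow> 'a set"
  assumes "prob_space M" "range A \<subseteq> sets M" "\<And>m n. m \<le> n \<Longrightarrow> A n \<subseteq> A m"
    "(\<Inter>n. A n) = {}" "0 < \<eta>"
  shows "\<exists>n. measure M (A n) < \<eta>"
proof -
  interpret prob_space M by fact
  have "(\<lambda>n. measure M (A n)) \<longlonglongrightarrow> measure M (\<Inter>n. A n)"
    by (rule finite_Lim_measure_decseq) (use assms in \<open>auto simp: decseq_def\<close>)
  then have "(\<lambda>n. measure M (A n)) \<longlonglongrightarrow> 0" using assms(4) by simp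
  then have "eventually (\<lambda>n. measure M (A n) < \<eta>) sequentially"
    using assms(5) by (rule order_tendstoD)
  then show ?thesis by (auto simp: eventually_sequentially)
qed

lemma negl_main:
  assumes P: "prob_space M" and T: "T > 0"
    and X: "cont_process M T X" and Y: "cont_process M T Y"
  shows "negl M T (\<lambda>\<epsilon> t \<omega>. levy_approx T X Y \<epsilon> t \<omega> - sym_approx T X Y \<epsilon> t \<omega> + sym_approx T Y X \<epsilon> t \<omega>)"
  unfolding negl_def
proof (intro allI impI)
  fix \<delta> \<eta> :: real assume \<delta>: "\<delta> > 0" and \<eta>: "\<eta> > 0"
  interpret prob_space M by fact
  note [measurable] = ext_meas[OF X T] ext_meas[OF Y T]
  define K where "K = (\<lambda>m::nat. {\<omega>\<in>space M. \<exists>q\<in>\<rat>. \<bar>ext T X q \<omega>\<bar> > real m \<or> \<bar>ext T Y q \<omega>\<bar> > real m})"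
  have Ks: "range K \<subseteq> sets M"
  proof safe
    fix m
    show "K m \<in> sets M" unfolding K_def
      by (rule sets.sets_Collect_countable_Ex') (auto simp: countable_rat)
  qed
  have Kd: "K n \<subseteq> K m" if "m \<le> n" for m n
    using that unfolding K_def by force
  have Ke: "(\<Inter>m. K m) = {}"
  proof safe
    fix \<omega> assume w: "\<omega> \<in> (\<Inter>m. K m)"
    then have ws: "\<omega> \<in> space M" unfolding K_def by auto
    obtain B1 where B1: "\<forall>s. \<bar>ext T X s \<omega>\<bar> \<le> B1" using ext_bounded[OF X T ws] by blast
    obtain B2 where B2: "\<forall>s. \<bar>ext T Y s \<omega>\<bar> \<le> B2" using ext_bounded[OF Y T ws] by blast
    obtain m :: nat where "max B1 B2 < real m" using reals_Archimedean2 by blast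
    moreover from w have "\<omega> \<in> K m" by blast
    then obtain q where "real m < \<bar>ext T X q \<omega>\<bar> \<or> real m < \<bar>ext T Y q \<omega>\<bar>"
      unfolding K_def by blast
    ultimately show "\<omega> \<in> {}" using B1 B2 by (smt (verit))
  qed
  obtain m where m: "measure M (K m) < \<eta> / 3"
    using small_measure[OF P Ks Kd Ke, of "\<eta> / 3"] \<eta> by auto
  define c where "c = \<delta> / (4 * (real m + 1))"
  have c0: "c > 0" using \<delta> by (simp add: c_def)
  have mc: "2 * real m * c < \<delta>"
  proof -
    have "2 * real m * c = \<delta> * (2 * real m) / (4 * (real m + 1))" by (simp add: c_def)
    also have "\<dots> < \<delta>" using \<delta> by (simp add: divide_simps)
    finally show ?thesis .
  qed
  define C where "C = (\<lambda>n::nat. {\<omega>\<in>space M. \<exists>p\<in>\<rat> \<times> \<rat>. \<bar>fst p - snd p\<bar> < 1 / (real n + 1) \<and>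
      (\<bar>ext T X (fst p) \<omega> - ext T X (snd p) \<omega>\<bar> > c \<or> \<bar>ext T Y (fst p) \<omega> - ext T Y (snd p) \<omega>\<bar> > c)})"
  have Cs: "range C \<subseteq> sets M"
  proof safe
    fix n
    show "C n \<in> sets M" unfolding C_def
      by (rule sets.sets_Collect_countable_Ex') (auto simp: countable_rat)
  qed
  have Cd: "C n \<subseteq> C m" if "m \<le> n" for m n
  proof -
    have "1 / (real n + 1) \<le> 1 / (real m + 1)" using that by (simp add: divide_simps)
    then show ?thesis unfolding C_def by force
  qed
  have Ce: "(\<Inter>n. C n) = {}"
  proof safe
    fix \<omega> assume w: "\<omega> \<in> (\<Inter>n. C n)"
    then have ws: "\<omega> \<in> space M" unfolding C_def by auto
    obtain d1 where d1: "d1 > 0" "\<forall>s u. \<bar>s - u\<bar> < d1 \<longrightarrow> \<bar>ext T X s \<omega> - ext T X u \<omega>\<bar> < c"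
      using ext_unif[OF X T ws c0] by blast
    obtain d2 where d2: "d2 > 0" "\<forall>s u. \<bar>s - u\<bar> < d2 \<longrightarrow> \<bar>ext T Y s \<omega> - ext T Y u \<omega>\<bar> < c"
      using ext_unif[OF Y T ws c0] by blast
    obtain n where n: "inverse (real (Suc n)) < min d1 d2"
      using reals_Archimedean[of "min d1 d2"] d1 d2 by auto
    have "1 / (real n + 1) < min d1 d2" using n by (simp add: field_simps)
    moreover from w have "\<omega> \<in> C n" by blast
    then obtain p where "\<bar>fst p - snd p\<bar> < 1 / (real n + 1)" and
      "\<bar>ext T X (fst p) \<omega> - ext T X (snd p) \<omega>\<bar> > c \<or> \<bar>ext T Y (fst p) \<omega> - ext T Y (snd p) \<omega>\<bar> > c"
      unfolding C_def by blast
    ultimately show "\<omega> \<in> {}" using d1 d2 by (smt (verit))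
  qed
  obtain n where n: "measure M (C n) < \<eta> / 3"
    using small_measure[OF P Cs Cd Ce, of "\<eta> / 3"] \<eta> by auto
  define d where "d = 1 / (real n + 1)"
  have d0: "0 < d" "d \<le> 1" by (auto simp: d_def divide_simps)
  show "\<exists>\<epsilon>0>0. \<forall>\<epsilon>. 0 < \<epsilon> \<and> \<epsilon> < \<epsilon>0 \<longrightarrow> (\<exists>A\<in>sets M.
          {\<omega> \<in> space M. \<exists>t\<in>{0..T}. \<delta> < \<bar>levy_approx T X Y \<epsilon> t \<omega> - sym_approx T X Y \<epsilon> t \<omega> + sym_approx T Y X \<epsilon> t \<omega>\<bar>} \<subseteq> A
          \<and> measure M A < \<eta>)"
  proof (intro exI conjI allI impI)
    show "0 < d" by fact
    fix \<epsilon> :: real assume e: "0 < \<epsilon> \<and> \<epsilon> < d"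
    show "\<exists>A\<in>sets M.
          {\<omega> \<in> space M. \<exists>t\<in>{0..T}. \<delta> < \<bar>levy_approx T X Y \<epsilon> t \<omega> - sym_approx T X Y \<epsilon> t \<omega> + sym_approx T Y X \<epsilon> t \<omega>\<bar>} \<subseteq> A
          \<and> measure M A < \<eta>"
    proof (intro bexI conjI)
      have "measure M (K m \<union> C n) \<le> measure M (K m) + measure M (C n)"
        using Ks Cs by (intro measure_Un_le) auto
      then show "measure M (K m \<union> C n) < \<eta>" using m n \<eta> by linarith
      show "K m \<union> C n \<in> sets M" using Ks Cs by auto
      show "{\<omega> \<in> space M. \<exists>t\<in>{0..T}. \<delta> < \<bar>levy_approx T X Y \<epsilon> t \<omega> - sym_approx T X Y \<epsilon> t \<omega> + sym_approx T Y X \<epsilon> t \<omega>\<bar>} \<subseteq> K m \<union> C n"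
      proof (rule subsetI, rule ccontr)
        fix \<omega> assume w: "\<omega> \<in> {\<omega> \<in> space M. \<exists>t\<in>{0..T}. \<delta> < \<bar>levy_approx T X Y \<epsilon> t \<omega> - sym_approx T X Y \<epsilon> t \<omega> + sym_approx T Y X \<epsilon> t \<omega>\<bar>}"
          and nw: "\<omega> \<notin> K m \<union> C n"
        from w have ws: "\<omega> \<in> space M" by auto
        from w obtain t where t: "t \<in> {0..T}"
          and big: "\<delta> < \<bar>levy_approx T X Y \<epsilon> t \<omega> - sym_approx T X Y \<epsilon> t \<omega> + sym_approx T Y X \<epsilon> t \<omega>\<bar>" by auto
        define x where "x = (\<lambda>s. ext T X s \<omega>)"
        define y where "y = (\<lambda>s. ext T Y s \<omega>)"
        have cx: "continuous_on UNIV x" unfolding x_def by (rule ext_cont[OF X T ws])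
        have cy: "continuous_on UNIV y" unfolding y_def by (rule ext_cont[OF Y T ws])
        have qK: "\<bar>x q\<bar> \<le> real m \<and> \<bar>y q\<bar> \<le> real m" if "q \<in> \<rat>" for q
          using nw ws that unfolding K_def x_def y_def by (auto simp: not_less)
        have bx: "\<bar>x s\<bar> \<le> real m" for s
          by (rule dense_le[of "\<lambda>s. \<bar>x s\<bar>" UNIV]) (use qK cx in \<open>auto intro: continuous_intros\<close>)
        have byy: "\<bar>y s\<bar> \<le> real m" for s
          by (rule dense_le[of "\<lambda>s. \<bar>y s\<bar>" UNIV]) (use qK cy in \<open>auto intro: continuous_intros\<close>)
        have qC: "\<bar>x q - x r\<bar> \<le> c \<and> \<bar>y q - y r\<bar> \<le> c" if "q \<in> \<rat>" "r \<in> \<rat>" "\<bar>q - r\<bar> < d" for q r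
          using nw ws that unfolding C_def x_def y_def d_def by (force simp: not_less)
        have osc: "\<bar>f s - f u\<bar> \<le> c" if "\<bar>s - u\<bar> < d" and cf: "continuous_on UNIV f"
          and qf: "\<And>q r. q \<in> \<rat> \<Longrightarrow> r \<in> \<rat> \<Longrightarrow> \<bar>q - r\<bar> < d \<Longrightarrow> \<bar>f q - f r\<bar> \<le> c" for f s u
        proof -
          have step1: "\<bar>f s' - f r\<bar> \<le> c" if "r \<in> \<rat>" "\<bar>s' - r\<bar> < d" for s' r
            by (rule dense_le[of "\<lambda>s'. \<bar>f s' - f r\<bar>" "ball r d"])
               (use that qf cf in \<open>auto intro!: continuous_intros simp: dist_real_def abs_minus_commute\<close>)
          show ?thesis
            by (rule dense_le[of "\<lambda>u. \<bar>f s - f u\<bar>" "ball s d"])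
               (use that step1 cf in \<open>auto intro!: continuous_intros simp: dist_real_def abs_minus_commute\<close>)
        qed
        have ox: "\<bar>x s - x u\<bar> \<le> c" if "\<bar>s - u\<bar> < d" for s u
          using osc[OF that cx] qC by blast
        have oy: "\<bar>y s - y u\<bar> \<le> c" if "\<bar>s - u\<bar> < d" for s u
          using osc[OF that cy] qC by blast
        have "\<bar>levy_approx T X Y \<epsilon> t \<omega> - sym_approx T X Y \<epsilon> t \<omega> + sym_approx T Y X \<epsilon> t \<omega>\<bar> \<le> 2 * real m * c"
          using det_bound[OF cx cy bx byy ox oy, where e=\<epsilon> and t=t] e d0 t
          unfolding x_def y_def levy_approx_def sym_approx_def by auto
        with big mc show False by linarith
      qed
    qed
  qed
qed


lemma negl_neg: "negl M T D \<Longrightarrow> negl M T (\<lambda>\<epsilon> t \<omega>. - D \<epsilon> t \<omega>)"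
  unfolding negl_def by simp

lemma negl_zero: "negl M T (\<lambda>\<epsilon> t \<omega>. 0)"
  unfolding negl_def by (intro allI impI exI[of _ 1]) (auto intro!: bexI[of _ "{}"])

lemma cont_process_neg: "cont_process M T I \<Longrightarrow> cont_process M T (\<lambda>t \<omega>. - I t \<omega>)"
  unfolding cont_process_def by (auto intro!: continuous_intros)

lemma ucp_neg: "ucp_conv M T F I \<Longrightarrow> ucp_conv M T (\<lambda>\<epsilon> t \<omega>. - F \<epsilon> t \<omega>) (\<lambda>t \<omega>. - I t \<omega>)"
  unfolding ucp_conv_def using cont_process_neg[of M T I]
  by (simp add: abs_minus_commute)

lemma ucp_add3:
  assumes P: "prob_space M" and F: "ucp_conv M T F I1" and G: "ucp_conv M T G I2" and D: "negl M T D"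
    and H: "\<And>\<epsilon> t \<omega>. 0 < \<epsilon> \<Longrightarrow> t \<in> {0..T} \<Longrightarrow> \<omega> \<in> space M \<Longrightarrow> H \<epsilon> t \<omega> = F \<epsilon> t \<omega> + G \<epsilon> t \<omega> + D \<epsilon> t \<omega>"
    and I: "\<And>t \<omega>. I t \<omega> = I1 t \<omega> + I2 t \<omega>"
  shows "ucp_conv M T H I"
proof -
  have cI: "cont_process M T I"
    using F G unfolding ucp_conv_def cont_process_def I by (auto intro!: continuous_intros borel_measurable_add)
  have "\<exists>\<epsilon>0>0. \<forall>\<epsilon>. 0 < \<epsilon> \<and> \<epsilon> < \<epsilon>0 \<longrightarrow>
        (\<exists>A\<in>sets M. {\<omega>\<in>space M. \<exists>t\<in>{0..T}. \<bar>H \<epsilon> t \<omega> - I t \<omega>\<bar> > \<delta>} \<subseteq> A \<and> measure M A < \<eta>)"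
    if \<delta>: "\<delta> > 0" and \<eta>: "\<eta> > 0" for \<delta> \<eta>
  proof -
    have d3: "\<delta>/3 > 0" "\<eta>/3 > 0" using \<delta> \<eta> by auto
    obtain e1 where e1: "e1 > 0" "\<forall>\<epsilon>. 0 < \<epsilon> \<and> \<epsilon> < e1 \<longrightarrow>
        (\<exists>A\<in>sets M. {\<omega>\<in>space M. \<exists>t\<in>{0..T}. \<bar>F \<epsilon> t \<omega> - I1 t \<omega>\<bar> > \<delta>/3} \<subseteq> A \<and> measure M A < \<eta>/3)"
      using F d3 unfolding ucp_conv_def by blast
    obtain e2 where e2: "e2 > 0" "\<forall>\<epsilon>. 0 < \<epsilon> \<and> \<epsilon> < e2 \<longrightarrow>
        (\<exists>A\<in>sets M. {\<omega>\<in>space M. \<exists>t\<in>{0..T}. \<bar>G \<epsilon> t \<omega> - I2 t \<omega>\<bar> > \<delta>/3} \<subseteq> A \<and> measure M A < \<eta>/3)"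
      using G d3 unfolding ucp_conv_def by blast
    obtain e3 where e3: "e3 > 0" "\<forall>\<epsilon>. 0 < \<epsilon> \<and> \<epsilon> < e3 \<longrightarrow>
        (\<exists>A\<in>sets M. {\<omega>\<in>space M. \<exists>t\<in>{0..T}. \<bar>D \<epsilon> t \<omega>\<bar> > \<delta>/3} \<subseteq> A \<and> measure M A < \<eta>/3)"
      using D d3 unfolding negl_def by blast
    show ?thesis
    proof (intro exI[of _ "min e1 (min e2 e3)"] conjI allI impI)
      show "0 < min e1 (min e2 e3)" using e1 e2 e3 by simp
      fix \<epsilon> assume e: "0 < \<epsilon> \<and> \<epsilon> < min e1 (min e2 e3)"
      obtain A1 where A1: "A1 \<in> sets M" "{\<omega>\<in>space M. \<exists>t\<in>{0..T}. \<bar>F \<epsilon> t \<omega> - I1 t \<omega>\<bar> > \<delta>/3} \<subseteq> A1" "measure M A1 < \<eta>/3"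
        using e1 e by auto
      obtain A2 where A2: "A2 \<in> sets M" "{\<omega>\<in>space M. \<exists>t\<in>{0..T}. \<bar>G \<epsilon> t \<omega> - I2 t \<omega>\<bar> > \<delta>/3} \<subseteq> A2" "measure M A2 < \<eta>/3"
        using e2 e by auto
      obtain A3 where A3: "A3 \<in> sets M" "{\<omega>\<in>space M. \<exists>t\<in>{0..T}. \<bar>D \<epsilon> t \<omega>\<bar> > \<delta>/3} \<subseteq> A3" "measure M A3 < \<eta>/3"
        using e3 e by auto
      show "\<exists>A\<in>sets M. {\<omega>\<in>space M. \<exists>t\<in>{0..T}. \<bar>H \<epsilon> t \<omega> - I t \<omega>\<bar> > \<delta>} \<subseteq> A \<and> measure M A < \<eta>"
      proof (intro bexI conjI)
        show "A1 \<union> A2 \<union> A3 \<in> sets M" using A1 A2 A3 by auto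
        have "measure M (A1 \<union> A2 \<union> A3) \<le> measure M (A1 \<union> A2) + measure M A3"
          using A1 A2 A3 by (intro measure_Un_le) auto
        moreover have "measure M (A1 \<union> A2) \<le> measure M A1 + measure M A2"
          using A1 A2 A3 by (intro measure_Un_le) auto
        ultimately show "measure M (A1 \<union> A2 \<union> A3) < \<eta>" using A1 A2 A3 by linarith
        show "{\<omega>\<in>space M. \<exists>t\<in>{0..T}. \<bar>H \<epsilon> t \<omega> - I t \<omega>\<bar> > \<delta>} \<subseteq> A1 \<union> A2 \<union> A3"
        proof
          fix \<omega> assume "\<omega> \<in> {\<omega>\<in>space M. \<exists>t\<in>{0..T}. \<bar>H \<epsilon> t \<omega> - I t \<omega>\<bar> > \<delta>}"
          then obtain t where w: "\<omega> \<in> space M" "t \<in> {0..T}" "\<bar>H \<epsilon> t \<omega> - I t \<omega>\<bar> > \<delta>" by auto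
          then have "\<bar>F \<epsilon> t \<omega> - I1 t \<omega>\<bar> > \<delta>/3 \<or> \<bar>G \<epsilon> t \<omega> - I2 t \<omega>\<bar> > \<delta>/3 \<or> \<bar>D \<epsilon> t \<omega>\<bar> > \<delta>/3"
            using H[of \<epsilon> t \<omega>] I[of t \<omega>] e by linarith
          then show "\<omega> \<in> A1 \<union> A2 \<union> A3" using A1(2) A2(2) A3(2) w by blast
        qed
      qed
    qed
  qed
  then show ?thesis using cI unfolding ucp_conv_def by blast
qed

lemma fwd_identity:
  assumes T: "T > 0" and X: "cont_process M T X" and Y: "cont_process M T Y" and w: "\<omega> \<in> space M" and e: "\<epsilon> > 0"
  shows "levy_approx T X Y \<epsilon> t \<omega> = fwd_approx T X Y \<epsilon> t \<omega> - fwd_approx T Y X \<epsilon> t \<omega>"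
proof -
  have cx: "continuous_on UNIV (\<lambda>s. ext T X s \<omega>)" by (rule ext_cont[OF X T w])
  have cy: "continuous_on UNIV (\<lambda>s. ext T Y s \<omega>)" by (rule ext_cont[OF Y T w])
  have cx': "continuous_on UNIV (\<lambda>s. ext T X (s + \<epsilon>) \<omega>)" by (rule cont_shift[OF cx])
  have cy': "continuous_on UNIV (\<lambda>s. ext T Y (s + \<epsilon>) \<omega>)" by (rule cont_shift[OF cy])
  have i1: "(\<lambda>s. ext T X s \<omega> * ((ext T Y (s + \<epsilon>) \<omega> - ext T Y s \<omega>) / \<epsilon>)) integrable_on {0..t}"
    by (rule integrable_continuous_interval, rule continuous_on_subset[of UNIV])
       (use e cx cy cx' cy' in \<open>auto intro!: continuous_intros\<close>)
  have i2: "(\<lambda>s. ext T Y s \<omega> * ((ext T X (s + \<epsilon>) \<omega> - ext T X s \<omega>) / \<epsilon>)) integrable_on {0..t}"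
    by (rule integrable_continuous_interval, rule continuous_on_subset[of UNIV])
       (use e cx cy cx' cy' in \<open>auto intro!: continuous_intros\<close>)
  show ?thesis
    unfolding levy_approx_def fwd_approx_def integral_diff[OF i1 i2, symmetric]
    by (rule integral_cong) (use e in \<open>simp add: divide_simps algebra_simps\<close>)
qed

theorem proposition4p9:
  fixes M :: "'a measure" and T :: real and X Y :: "real \<Rightarrow> 'a \<Rightarrow> real"
  assumes "prob_space M" and "T > 0"
    and "cont_process M T X" and "cont_process M T Y"
  shows
   "(\<forall>L I1 I2.
      (ucp_conv M T (sym_approx T X Y) I1 \<and> ucp_conv M T (sym_approx T Y X) I2
         \<longrightarrow> ucp_conv M T (levy_approx T X Y) (\<lambda>t \<omega>. I1 t \<omega> - I2 t \<omega>)) \<and>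
      (ucp_conv M T (levy_approx T X Y) L \<and> ucp_conv M T (sym_approx T X Y) I1
         \<longrightarrow> ucp_conv M T (sym_approx T Y X) (\<lambda>t \<omega>. I1 t \<omega> - L t \<omega>)) \<and>
      (ucp_conv M T (levy_approx T X Y) L \<and> ucp_conv M T (sym_approx T Y X) I2
         \<longrightarrow> ucp_conv M T (sym_approx T X Y) (\<lambda>t \<omega>. L t \<omega> + I2 t \<omega>)))
    \<and>
    (\<forall>L I1 I2.
      (ucp_conv M T (fwd_approx T X Y) I1 \<and> ucp_conv M T (fwd_approx T Y X) I2
         \<longrightarrow> ucp_conv M T (levy_approx T X Y) (\<lambda>t \<omega>. I1 t \<omega> - I2 t \<omega>)) \<and>
      (ucp_conv M T (levy_approx T X Y) L \<and> ucp_conv M T (fwd_approx T X Y) I1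
         \<longrightarrow> ucp_conv M T (fwd_approx T Y X) (\<lambda>t \<omega>. I1 t \<omega> - L t \<omega>)) \<and>
      (ucp_conv M T (levy_approx T X Y) L \<and> ucp_conv M T (fwd_approx T Y X) I2
         \<longrightarrow> ucp_conv M T (fwd_approx T X Y) (\<lambda>t \<omega>. L t \<omega> + I2 t \<omega>)))"
proof -
  note P = assms(1)
  have N: "negl M T (\<lambda>\<epsilon> t \<omega>. levy_approx T X Y \<epsilon> t \<omega> - sym_approx T X Y \<epsilon> t \<omega> + sym_approx T Y X \<epsilon> t \<omega>)"
    by (rule negl_main[OF assms])
  note N' = negl_neg[OF N]
  note Z = negl_zero[of M T]
  note fi = fwd_identity[OF assms(2-4)]
  show ?thesis
  proof (intro conjI allI impI; elim conjE)
    fix I1 I2 assume a: "ucp_conv M T (sym_approx T X Y) I1" "ucp_conv M T (sym_approx T Y X) I2"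
    show "ucp_conv M T (levy_approx T X Y) (\<lambda>t \<omega>. I1 t \<omega> - I2 t \<omega>)"
      by (rule ucp_add3[OF P a(1) ucp_neg[OF a(2)] N]) auto
  next
    fix L I1 assume a: "ucp_conv M T (levy_approx T X Y) L" "ucp_conv M T (sym_approx T X Y) I1"
    show "ucp_conv M T (sym_approx T Y X) (\<lambda>t \<omega>. I1 t \<omega> - L t \<omega>)"
      by (rule ucp_add3[OF P a(2) ucp_neg[OF a(1)] N]) auto
  next
    fix L I2 assume a: "ucp_conv M T (levy_approx T X Y) L" "ucp_conv M T (sym_approx T Y X) I2"
    show "ucp_conv M T (sym_approx T X Y) (\<lambda>t \<omega>. L t \<omega> + I2 t \<omega>)"
      by (rule ucp_add3[OF P a(1) a(2) N']) auto
  next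
    fix I1 I2 assume a: "ucp_conv M T (fwd_approx T X Y) I1" "ucp_conv M T (fwd_approx T Y X) I2"
    show "ucp_conv M T (levy_approx T X Y) (\<lambda>t \<omega>. I1 t \<omega> - I2 t \<omega>)"
      by (rule ucp_add3[OF P a(1) ucp_neg[OF a(2)] Z]) (auto simp: fi)
  next
    fix L I1 assume a: "ucp_conv M T (levy_approx T X Y) L" "ucp_conv M T (fwd_approx T X Y) I1"
    show "ucp_conv M T (fwd_approx T Y X) (\<lambda>t \<omega>. I1 t \<omega> - L t \<omega>)"
      by (rule ucp_add3[OF P a(2) ucp_neg[OF a(1)] Z]) (auto simp: fi)
  next
    fix L I2 assume a: "ucp_conv M T (levy_approx T X Y) L" "ucp_conv M T (fwd_approx T Y X) I2"
    show "ucp_conv M T (fwd_approx T X Y) (\<lambda>t \<omega>. L t \<omega> + I2 t \<omega>)"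
      by (rule ucp_add3[OF P a(1) a(2) Z]) (auto simp: fi)
  qed
qed

end
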